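(* Let $S$ be a semigroup and $\emptyset\neq E\subseteq E(S)$. Then the partial operation $\circ$ on $C_E(S)$ is well defined (i.e. if $(e,s),(f,t)\in C_E(S)$ and $sf=s$ then $(e,st)\in C_E(S)$), and $P=(C_E(S),\circ,D)$ is a constellation whose set of right identities is $D(P)=\{(e,e)\mid e\in E\}$. Moreover, for $(e,s),(f,t)\in C_E(S)$, $(e,s)\le(f,t)$ in the natural quasiorder of $P$ if and only if $ef=e$ and $s=et$. If in addition $S$ is an $E$-demigroup, then $C^d_E(S)$ is a subconstellation of $C_E(S)$.
   Context: For a semigroup $S$, $E(S)$ denotes its set of idempotents. For $\emptyset\neq E\subseteq E(S)$, $C_E(S)=\{(e,s)\in E\times S\mid es=s\}$, with partial binary operation $(e,s)\circ(f,t)=(e,st)$, defined exactly when $sf=s$, and unary operation $D((e,s))=(e,e)$. A demigroup is a semigroup $S$ with a unary operation $d$ such that for all $x,y\in S$: $d(x)\in E(S)$, $d(x)x=x$ and $d(xy)=d(xd(y))$. For $E\subseteq E(S)$, a demigroup $S$ is an $E$-demigroup if $d(s)\in E$ for all $s\in S$ and $ed(e)=e$ for all $e\in E$. For an $E$-demigroup, $C^d_E(S)=\{(e,s)\in C_E(S)\mid d(e)=d(s)\}$ with the restricted operations. A constellation is a set $P$ with a partial binary operation $\circ$ and a unary operation $D$ such that for all $x,y,z\in P$: (C1) if $x\circ(y\circ z)$ exists then so does $(x\circ y)\circ z$, and they are equal; (C2) if $x\circ y$ and $y\circ z$ exist then $x\circ(y\circ z)$ exists; (C3) $D(x)$ is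 the unique right identity $e$ with $e\circ x=x$, where $e$ is a right identity if $a\circ e=a$ whenever $a\circ e$ exists. $D(P)=\{D(x)\mid x\in P\}$. The natural quasiorder on $P$ is: $s\le t$ iff $D(s)\circ t$ exists and equals $s$. A subset $Q\subseteq P$ is a subconstellation if $D(s)\in Q$ for all $s\in Q$, and $s\circ t\in Q$ whenever $s,t\in Q$ and $s\circ t$ exists in $P$. *)

theory Defs
  imports Main
begin

text \<open>A semigroup S is modelled as a type of class semigroup_mult (S = UNIV).\<close>

definition idempotents :: "'a::semigroup_mult set" where
  "idempotents = {e. e * e = e}"

text \<open>Constellations: carrier P, partial binary operation (None = undefined), unary D.\<close>

definition right_identity :: "'a set \<Rightarrow> ('a \<Rightarrow> 'a \<Rightarrow> 'a option) \<Rightarrow> 'a \<Rightarrow> bool" where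
  "right_identity P cmp e \<longleftrightarrow> e \<in> P \<and>
     (\<forall>a\<in>P. cmp a e \<noteq> None \<longrightarrow> cmp a e = Some a)"

definition constellation :: "'a set \<Rightarrow> ('a \<Rightarrow> 'a \<Rightarrow> 'a option) \<Rightarrow> ('a \<Rightarrow> 'a) \<Rightarrow> bool" where
  "constellation P cmp D \<longleftrightarrow>
     (\<forall>x\<in>P. \<forall>y\<in>P. \<forall>z. cmp x y = Some z \<longrightarrow> z \<in> P) \<and>
     (\<forall>x\<in>P. D x \<in> P) \<and>
     \<comment> \<open>(C1)\<close>
     (\<forall>x\<in>P. \<forall>y\<in>P. \<forall>z\<in>P.
        (\<exists>yz. cmp y z = Some yz \<and> cmp x yz \<noteq> None) \<longrightarrow>
        (\<exists>xy yz. cmp x y = Some xy \<and> cmp y z = Some yz \<and> cmp xy z = cmp x yz)) \<and>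
     \<comment> \<open>(C2)\<close>
     (\<forall>x\<in>P. \<forall>y\<in>P. \<forall>z\<in>P.
        cmp x y \<noteq> None \<and> cmp y z \<noteq> None \<longrightarrow>
        (\<exists>yz. cmp y z = Some yz \<and> cmp x yz \<noteq> None)) \<and>
     \<comment> \<open>(C3)\<close>
     (\<forall>x\<in>P. right_identity P cmp (D x) \<and> cmp (D x) x = Some x \<and>
        (\<forall>e. right_identity P cmp e \<and> cmp e x = Some x \<longrightarrow> e = D x))"

definition natural_quasiorder ::
  "('a \<Rightarrow> 'a \<Rightarrow> 'a option) \<Rightarrow> ('a \<Rightarrow> 'a) \<Rightarrow> 'a \<Rightarrow> 'a \<Rightarrow> bool" where
  "natural_quasiorder cmp D s t \<longleftrightarrow> cmp (D s) t = Some s"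

definition subconstellation ::
  "'a set \<Rightarrow> 'a set \<Rightarrow> ('a \<Rightarrow> 'a \<Rightarrow> 'a option) \<Rightarrow> ('a \<Rightarrow> 'a) \<Rightarrow> bool" where
  "subconstellation Q P cmp D \<longleftrightarrow> Q \<subseteq> P \<and> (\<forall>s\<in>Q. D s \<in> Q) \<and>
     (\<forall>s\<in>Q. \<forall>t\<in>Q. \<forall>u. cmp s t = Some u \<longrightarrow> u \<in> Q)"

definition CE :: "'a::semigroup_mult set \<Rightarrow> ('a \<times> 'a) set" where
  "CE E = {(e, s). e \<in> E \<and> e * s = s}"

definition CE_comp :: "('a::semigroup_mult \<times> 'a) \<Rightarrow> ('a \<times> 'a) \<Rightarrow> ('a \<times> 'a) option" where
  "CE_comp x y = (if snd x * fst y = snd x then Some (fst x, snd x * snd y) else None)"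

definition CE_D :: "('a \<times> 'a) \<Rightarrow> ('a \<times> 'a)" where
  "CE_D x = (fst x, fst x)"

definition demigroup :: "('a::semigroup_mult \<Rightarrow> 'a) \<Rightarrow> bool" where
  "demigroup d \<longleftrightarrow> (\<forall>x y. d x \<in> idempotents \<and> d x * x = x \<and> d (x * y) = d (x * d y))"

definition E_demigroup :: "'a::semigroup_mult set \<Rightarrow> ('a \<Rightarrow> 'a) \<Rightarrow> bool" where
  "E_demigroup E d \<longleftrightarrow> E \<subseteq> idempotents \<and> demigroup d \<and>
     (\<forall>s. d s \<in> E) \<and> (\<forall>e\<in>E. e * d e = e)"

definition CdE :: "'a::semigroup_mult set \<Rightarrow> ('a \<Rightarrow> 'a) \<Rightarrow> ('a \<times> 'a) set" where
  "CdE E d = {(e, s) \<in> CE E. d e = d s}"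

end

theory Submission
  imports Defs
begin

lemma c1: "\<exists>yz. CE_comp y z = Some yz \<and> CE_comp x yz \<noteq> None \<Longrightarrow>
  \<exists>xy yz. CE_comp x y = Some xy \<and> CE_comp y z = Some yz \<and> CE_comp xy z = CE_comp (x::'a::semigroup_mult\<times>'a) yz"
  apply (cases x; cases y; cases z)
  apply (simp add: CE_comp_def split: if_splits)
  by (metis mult.assoc)
lemma c2: "CE_comp x y \<noteq> None \<and> CE_comp y z \<noteq> None \<Longrightarrow>
  \<exists>yz. CE_comp y z = Some yz \<and> CE_comp (x::'a::semigroup_mult\<times>'a) yz \<noteq> None"
  by (cases x; cases y; cases z) (simp add: CE_comp_def split: if_splits)
lemma cc: "x \<in> CE E \<Longrightarrow> y \<in> CE E \<Longrightarrow> CE_comp x y = Some z \<Longrightarrow> z \<in> CE (E::'a::semigroup_mult set)"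
  by (cases x; cases y) (auto simp: CE_def CE_comp_def mult.assoc[symmetric] split: if_splits)

lemma ri_iff:
  assumes "E \<subseteq> idempotents" "x \<in> CE E"
  shows "right_identity (CE E) CE_comp x \<longleftrightarrow> fst x = snd x"
proof
  assume r: "right_identity (CE E) CE_comp x"
  obtain f t where x: "x = (f,t)" by (cases x)
  have f: "f \<in> E" "f * t = t" using assms(2) x by (auto simp: CE_def)
  have ff: "f * f = f" using f assms(1) by (auto simp: idempotents_def)
  have "(f,f) \<in> CE E" using f ff by (auto simp: CE_def)
  moreover have "CE_comp (f,f) x = Some (f,t)" using ff f x by (simp add: CE_comp_def)
  ultimately have "(f,t) = (f,f)" using r unfolding right_identity_def by fastforce
  thus "fst x = snd x" using x by simp
next
  assume h: "fst x = snd x"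
  show "right_identity (CE E) CE_comp x"
    using assms(2) h unfolding right_identity_def
    by (auto simp: CE_comp_def)
qed

theorem proposition3p1:
  fixes E :: "'a::semigroup_mult set"
  assumes "E \<noteq> {}" and "E \<subseteq> idempotents"
  shows "(\<forall>e s f t. (e, s) \<in> CE E \<longrightarrow> (f, t) \<in> CE E \<longrightarrow> s * f = s \<longrightarrow> (e, s * t) \<in> CE E)
    \<and> constellation (CE E) CE_comp CE_D
    \<and> CE_D ` CE E = {(e, e) | e. e \<in> E}
    \<and> {x \<in> CE E. right_identity (CE E) CE_comp x} = {(e, e) | e. e \<in> E}
    \<and> (\<forall>e s f t. (e, s) \<in> CE E \<longrightarrow> (f, t) \<in> CE E \<longrightarrow>
         (natural_quasiorder CE_comp CE_D (e, s) (f, t) \<longleftrightarrow> e * f = e \<and> s = e * t))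
    \<and> (\<forall>d. E_demigroup E d \<longrightarrow> subconstellation (CdE E d) (CE E) CE_comp CE_D)"
proof (intro conjI)
  have idem: "\<And>e. e \<in> E \<Longrightarrow> e * e = e" using assms(2) by (auto simp: idempotents_def)
  show cl: "\<forall>e s f t. (e, s) \<in> CE E \<longrightarrow> (f, t) \<in> CE E \<longrightarrow> s * f = s \<longrightarrow> (e, s * t) \<in> CE E"
    by (auto simp: CE_def mult.assoc[symmetric])
  have DI: "\<And>x. x \<in> CE E \<Longrightarrow> CE_D x \<in> CE E" using idem by (auto simp: CE_def CE_D_def)
  show "constellation (CE E) CE_comp CE_D"
    unfolding constellation_def
  proof (intro conjI ballI allI impI)
    show "\<And>x y z. x \<in> CE E \<Longrightarrow> y \<in> CE E \<Longrightarrow> CE_comp x y = Some z \<Longrightarrow> z \<in> CE E" by (rule cc)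
    show "\<And>x. x \<in> CE E \<Longrightarrow> CE_D x \<in> CE E" by (rule DI)
    show "\<exists>xy yz. CE_comp x y = Some xy \<and> CE_comp y z = Some yz \<and> CE_comp xy z = CE_comp x yz"
      if "x \<in> CE E" "y \<in> CE E" "z \<in> CE E" "\<exists>yz. CE_comp y z = Some yz \<and> CE_comp x yz \<noteq> None" for x y z
      using that(4) by (rule c1)
    show "\<exists>yz. CE_comp y z = Some yz \<and> CE_comp x yz \<noteq> None"
      if "x \<in> CE E" "y \<in> CE E" "z \<in> CE E" "CE_comp x y \<noteq> None \<and> CE_comp y z \<noteq> None" for x y z
      using that(4) by (rule c2)
    fix x assume x: "x \<in> CE E"
    show "right_identity (CE E) CE_comp (CE_D x)"
      using ri_iff[OF assms(2) DI[OF x]] by (simp add: CE_D_def)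
    show "CE_comp (CE_D x) x = Some x" using x idem
      by (auto simp: CE_def CE_D_def CE_comp_def)
    fix e assume h: "right_identity (CE E) CE_comp e \<and> CE_comp e x = Some x"
    hence "e \<in> CE E" by (simp add: right_identity_def)
    hence "fst e = snd e" using ri_iff[OF assms(2)] h by blast
    thus "e = CE_D x" using h by (cases e; cases x) (auto simp: CE_D_def CE_comp_def split: if_splits)
  qed
  show "CE_D ` CE E = {(e, e) | e. e \<in> E}"
  proof
    show "CE_D ` CE E \<subseteq> {(e, e) | e. e \<in> E}" by (auto simp: CE_def CE_D_def)
    show "{(e, e) | e. e \<in> E} \<subseteq> CE_D ` CE E"
    proof
      fix x assume "x \<in> {(e, e) | e. e \<in> E}"
      then obtain e where e: "x = (e,e)" "e \<in> E" by blast
      hence "(e,e) \<in> CE E" using idem by (auto simp: CE_def)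
      thus "x \<in> CE_D ` CE E" using e by (force simp: CE_D_def)
    qed
  qed
  show "{x \<in> CE E. right_identity (CE E) CE_comp x} = {(e, e) | e. e \<in> E}"
    using ri_iff[OF assms(2)] idem by (auto simp: CE_def)
  show "\<forall>e s f t. (e, s) \<in> CE E \<longrightarrow> (f, t) \<in> CE E \<longrightarrow>
         (natural_quasiorder CE_comp CE_D (e, s) (f, t) \<longleftrightarrow> e * f = e \<and> s = e * t)"
    by (auto simp: natural_quasiorder_def CE_comp_def CE_D_def)
  show "\<forall>d. E_demigroup E d \<longrightarrow> subconstellation (CdE E d) (CE E) CE_comp CE_D"
  proof (intro allI impI)
    fix d assume dm: "E_demigroup E d"
    hence dd: "\<And>x y. d (x * y) = d (x * d y)" by (auto simp: E_demigroup_def demigroup_def)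
    show "subconstellation (CdE E d) (CE E) CE_comp CE_D"
      unfolding subconstellation_def
    proof (intro conjI ballI allI impI)
      show "CdE E d \<subseteq> CE E" by (auto simp: CdE_def)
      show "\<And>s. s \<in> CdE E d \<Longrightarrow> CE_D s \<in> CdE E d"
        using DI by (auto simp: CdE_def CE_D_def)
      fix x y u assume x: "x \<in> CdE E d" and y: "y \<in> CdE E d" and c: "CE_comp x y = Some u"
      obtain e s where xe: "x = (e,s)" by (cases x)
      obtain f t where yf: "y = (f,t)" by (cases y)
      have sf: "s * f = s" and u: "u = (e, s*t)" using c xe yf by (auto simp: CE_comp_def split: if_splits)
      have de: "d e = d s" "d f = d t" using x y xe yf by (auto simp: CdE_def)
      have "d (s*t) = d (s * d t)" by (rule dd)
      also have "\<dots> = d (s * d f)" using de by simp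
      also have "\<dots> = d (s * f)" by (rule dd[symmetric])
      finally have "d (s*t) = d e" using sf de by simp
      moreover have "x \<in> CE E" "y \<in> CE E" using x y by (auto simp: CdE_def)
      hence "u \<in> CE E" using cc c by blast
      ultimately show "u \<in> CdE E d" using u by (simp add: CdE_def)
    qed
  qed
qed

end
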